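(* For all $\boldsymbol\mu,\boldsymbol\mu'\in\mathcal P(\mathcal X\times[K])$ and every collection $\boldsymbol\pi=(\pi_k)_{k\in[K]}$ of decision rules $\pi_k:\mathcal X\times\mathcal P(\mathcal X\times[K])\to\mathcal P(\mathcal U)$ with $|\pi_k(x,\boldsymbol\mu_1)-\pi_k(x,\boldsymbol\mu_2)|_1\le L_Q|\boldsymbol\mu_1-\boldsymbol\mu_2|_1$ for all $x,k,\boldsymbol\mu_1,\boldsymbol\mu_2$, $$|P^{\mathrm{MF}}(\boldsymbol\mu,\boldsymbol\pi)-P^{\mathrm{MF}}(\boldsymbol\mu',\boldsymbol\pi)|_1\le S_P|\boldsymbol\mu-\boldsymbol\mu'|_1,\qquad S_P=(1+L_Q)+L_P(2+L_Q).$$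
   Context: $K\ge1$, $[K]=\{1,\dots,K\}$, $\mathcal X,\mathcal U$ finite, $\mathcal P(A)$ probability distributions on $A$, $|\cdot|_1$ the $L_1$ norm, $L_P,L_Q>0$. For each $k$, $P_k:\mathcal X\times\mathcal U\times\mathcal P(\mathcal X\times[K])\times\mathcal P(\mathcal U\times[K])\to\mathcal P(\mathcal X)$ satisfies $|P_k(x,u,\boldsymbol\mu_1,\boldsymbol\nu_1)-P_k(x,u,\boldsymbol\mu_2,\boldsymbol\nu_2)|_1\le L_P(|\boldsymbol\mu_1-\boldsymbol\mu_2|_1+|\boldsymbol\nu_1-\boldsymbol\nu_2|_1)$. Define $\nu^{\mathrm{MF}}(\boldsymbol\mu,\boldsymbol\pi)(u,k)=\sum_x\pi_k(x,\boldsymbol\mu)(u)\boldsymbol\mu(x,k)$ and $P^{\mathrm{MF}}(\boldsymbol\mu,\boldsymbol\pi)\in\mathcal P(\mathcal X\times[K])$ by $P^{\mathrm{MF}}(\boldsymbol\mu,\boldsymbol\pi)(x',k)=\sum_{x\in\mathcal X}\sum_{u\in\mathcal U}\boldsymbol\mu(x,k)\pi_k(x,\boldsymbol\mu)(u)P_k(x,u,\boldsymbol\mu,\nu^{\mathrm{MF}}(\boldsymbol\mu,\boldsymbol\pi))(x')$. *)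

theory Defs
  imports Complex_Main
begin

definition is_dist :: "'a set \<Rightarrow> ('a \<Rightarrow> real) \<Rightarrow> bool" where
  "is_dist A p \<longleftrightarrow> (\<forall>a. 0 \<le> p a) \<and> (\<forall>a. a \<notin> A \<longrightarrow> p a = 0) \<and> sum p A = 1"

definition l1 :: "'a set \<Rightarrow> ('a \<Rightarrow> real) \<Rightarrow> ('a \<Rightarrow> real) \<Rightarrow> real" where
  "l1 A p q = (\<Sum>a\<in>A. \<bar>p a - q a\<bar>)"

abbreviation idx :: "nat \<Rightarrow> nat set" where
  "idx K \<equiv> {1..K}"

definition nu_MF :: "('x::finite \<times> nat \<Rightarrow> real) \<Rightarrow> (nat \<Rightarrow> 'x \<Rightarrow> ('x \<times> nat \<Rightarrow> real) \<Rightarrow> 'u \<Rightarrow> real)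
    \<Rightarrow> ('u \<times> nat \<Rightarrow> real)" where
  "nu_MF mu pol = (\<lambda>(u, k). \<Sum>x\<in>UNIV. pol k x mu u * mu (x, k))"

definition P_MF :: "(nat \<Rightarrow> 'x \<Rightarrow> 'u \<Rightarrow> ('x \<times> nat \<Rightarrow> real) \<Rightarrow> ('u \<times> nat \<Rightarrow> real) \<Rightarrow> 'x \<Rightarrow> real)
    \<Rightarrow> ('x::finite \<times> nat \<Rightarrow> real) \<Rightarrow> (nat \<Rightarrow> 'x \<Rightarrow> ('x \<times> nat \<Rightarrow> real) \<Rightarrow> 'u::finite \<Rightarrow> real)
    \<Rightarrow> ('x \<times> nat \<Rightarrow> real)" where
  "P_MF P mu pol = (\<lambda>(x', k). \<Sum>x\<in>UNIV. \<Sum>u\<in>UNIV.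
      mu (x, k) * pol k x mu u * P k x u mu (nu_MF mu pol) x')"

end

theory Submission
  imports Defs
begin

lemma sum_prod_swap: "sum h ((UNIV::'a::finite set) \<times> I) = (\<Sum>k\<in>I. \<Sum>x\<in>UNIV. h (x,k))"
proof -
  have "sum h (UNIV \<times> I) = (\<Sum>x\<in>UNIV. \<Sum>k\<in>I. h (x,k))"
    by (simp add: sum.cartesian_product)
  also have "\<dots> = (\<Sum>k\<in>I. \<Sum>x\<in>UNIV. h (x,k))"
    by (rule sum.swap)
  finally show ?thesis .
qed

theorem lemma4:
  fixes K :: nat and L_P L_Q :: real
    and P :: "nat \<Rightarrow> 'x::finite \<Rightarrow> 'u::finite \<Rightarrow> ('x \<times> nat \<Rightarrow> real) \<Rightarrow> ('u \<times> nat \<Rightarrow> real) \<Rightarrow> 'x \<Rightarrow> real"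
    and pol :: "nat \<Rightarrow> 'x \<Rightarrow> ('x \<times> nat \<Rightarrow> real) \<Rightarrow> 'u \<Rightarrow> real"
    and mu mu' :: "'x \<times> nat \<Rightarrow> real"
  assumes K: "K \<ge> 1"
    and LP: "L_P > 0" and LQ: "L_Q > 0"
    and P_dist: "\<And>k x u m n. k \<in> idx K \<Longrightarrow> is_dist (UNIV \<times> idx K) m \<Longrightarrow>
        is_dist (UNIV \<times> idx K) n \<Longrightarrow> is_dist UNIV (P k x u m n)"
    and P_lip: "\<And>k x u m1 m2 n1 n2. k \<in> idx K \<Longrightarrow>
        is_dist (UNIV \<times> idx K) m1 \<Longrightarrow> is_dist (UNIV \<times> idx K) m2 \<Longrightarrow>
        is_dist (UNIV \<times> idx K) n1 \<Longrightarrow> is_dist (UNIV \<times> idx K) n2 \<Longrightarrow>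
        l1 UNIV (P k x u m1 n1) (P k x u m2 n2)
          \<le> L_P * (l1 (UNIV \<times> idx K) m1 m2 + l1 (UNIV \<times> idx K) n1 n2)"
    and pi_dist: "\<And>k x m. k \<in> idx K \<Longrightarrow> is_dist (UNIV \<times> idx K) m \<Longrightarrow>
        is_dist UNIV (pol k x m)"
    and pi_lip: "\<And>k x m1 m2. k \<in> idx K \<Longrightarrow>
        is_dist (UNIV \<times> idx K) m1 \<Longrightarrow> is_dist (UNIV \<times> idx K) m2 \<Longrightarrow>
        l1 UNIV (pol k x m1) (pol k x m2) \<le> L_Q * l1 (UNIV \<times> idx K) m1 m2"
    and mu: "is_dist (UNIV \<times> idx K) mu"
    and mu': "is_dist (UNIV \<times> idx K) mu'"
  shows "l1 (UNIV \<times> idx K) (P_MF P mu pol) (P_MF P mu' pol)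
           \<le> ((1 + L_Q) + L_P * (2 + L_Q)) * l1 (UNIV \<times> idx K) mu mu'"
proof -
  define I where "I = idx K"
  define d where "d = l1 (UNIV \<times> I) mu mu'"
  define nu where "nu = nu_MF mu pol"
  define nu' where "nu' = nu_MF mu' pol"
  define dn where "dn = l1 (UNIV \<times> I) nu nu'"
  have muD: "\<And>a. 0 \<le> mu a" "\<And>x k. k \<notin> I \<Longrightarrow> mu (x,k) = 0" "sum mu (UNIV \<times> I) = 1"
    using mu unfolding is_dist_def I_def by auto
  have mu'D: "\<And>a. 0 \<le> mu' a" "\<And>x k. k \<notin> I \<Longrightarrow> mu' (x,k) = 0" "sum mu' (UNIV \<times> I) = 1"
    using mu' unfolding is_dist_def I_def by auto
  have piD: "\<And>k x u. k \<in> I \<Longrightarrow> 0 \<le> pol k x mu u" "\<And>k x. k \<in> I \<Longrightarrow> (\<Sum>u\<in>UNIV. pol k x mu u) = 1"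
    using pi_dist[OF _ mu] unfolding is_dist_def I_def by auto
  have pi'D: "\<And>k x u. k \<in> I \<Longrightarrow> 0 \<le> pol k x mu' u" "\<And>k x. k \<in> I \<Longrightarrow> (\<Sum>u\<in>UNIV. pol k x mu' u) = 1"
    using pi_dist[OF _ mu'] unfolding is_dist_def I_def by auto
  have nu_dist: "is_dist (UNIV \<times> idx K) (nu_MF m pol)" if m: "is_dist (UNIV \<times> idx K) m" for m
  proof -
    have mD: "\<And>a. 0 \<le> m a" "\<And>x k. k \<notin> I \<Longrightarrow> m (x,k) = 0" "sum m (UNIV \<times> I) = 1"
      using m unfolding is_dist_def I_def by auto
    have pD: "\<And>k x u. k \<in> I \<Longrightarrow> 0 \<le> pol k x m u" "\<And>k x. k \<in> I \<Longrightarrow> (\<Sum>u\<in>UNIV. pol k x m u) = 1"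
      using pi_dist[OF _ m] unfolding is_dist_def I_def by auto
    have "0 \<le> nu_MF m pol a" for a
    proof (cases a)
      case (Pair u k)
      show ?thesis
      proof (cases "k \<in> I")
        case True then show ?thesis unfolding Pair nu_MF_def
          by (simp add: sum_nonneg mD(1) pD(1))
      next
        case False then show ?thesis unfolding Pair nu_MF_def by (simp add: mD(2))
      qed
    qed
    moreover have "nu_MF m pol (u,k) = 0" if "k \<notin> I" for u k
      unfolding nu_MF_def by (simp add: mD(2) that)
    moreover have "sum (nu_MF m pol) (UNIV \<times> I) = 1"
    proof -
      have "sum (nu_MF m pol) (UNIV \<times> I) = (\<Sum>k\<in>I. \<Sum>u\<in>UNIV. \<Sum>x\<in>UNIV. pol k x m u * m (x, k))"
        by (simp add: sum_prod_swap nu_MF_def)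
      also have "\<dots> = (\<Sum>k\<in>I. \<Sum>x\<in>UNIV. m (x, k) * (\<Sum>u\<in>UNIV. pol k x m u))"
        by (rule sum.cong, simp, subst sum.swap) (simp add: sum_distrib_left mult.commute)
      also have "\<dots> = (\<Sum>k\<in>I. \<Sum>x\<in>UNIV. m (x, k))"
        by (rule sum.cong, simp, rule sum.cong, simp) (simp add: pD)
      also have "\<dots> = 1" using mD(3) by (simp add: sum_prod_swap)
      finally show ?thesis .
    qed
    ultimately have "(\<forall>a. 0 \<le> nu_MF m pol a) \<and> (\<forall>a. a \<notin> UNIV \<times> I \<longrightarrow> nu_MF m pol a = 0)
        \<and> sum (nu_MF m pol) (UNIV \<times> I) = 1"
      by (metis SigmaI UNIV_I surj_pair)
    then show ?thesis unfolding is_dist_def I_def by blast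
  qed
  have nu: "is_dist (UNIV \<times> idx K) nu" and nu': "is_dist (UNIV \<times> idx K) nu'"
    unfolding nu_def nu'_def by (rule nu_dist[OF mu], rule nu_dist[OF mu'])
  have d_eq: "d = (\<Sum>k\<in>I. \<Sum>x\<in>UNIV. \<bar>mu (x,k) - mu' (x,k)\<bar>)"
    by (simp add: d_def l1_def sum_prod_swap)
  have sum_mu': "(\<Sum>k\<in>I. \<Sum>x\<in>UNIV. mu' (x,k)) = 1"
    using mu'D(3) by (simp add: sum_prod_swap)
  have d0: "0 \<le> d" unfolding d_eq by (intro sum_nonneg) auto
  have pilip: "(\<Sum>u\<in>UNIV. \<bar>pol k x mu u - pol k x mu' u\<bar>) \<le> L_Q * d" if "k \<in> I" for k x
    using pi_lip[OF _ mu mu', of k x] that by (simp add: l1_def d_def I_def)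
  have dn_le: "dn \<le> (1 + L_Q) * d"
  proof -
    have "dn = (\<Sum>k\<in>I. \<Sum>u\<in>UNIV. \<bar>\<Sum>x\<in>UNIV. pol k x mu u * mu (x, k) - pol k x mu' u * mu' (x, k)\<bar>)"
      by (simp add: dn_def l1_def sum_prod_swap nu_def nu'_def nu_MF_def sum_subtractf)
    also have "\<dots> \<le> (\<Sum>k\<in>I. \<Sum>u\<in>UNIV. \<Sum>x\<in>UNIV.
        pol k x mu u * \<bar>mu (x, k) - mu' (x,k)\<bar> + mu' (x,k) * \<bar>pol k x mu u - pol k x mu' u\<bar>)"
    proof (intro sum_mono order.trans[OF sum_abs])
      fix k u x assume k: "k \<in> I"
      have "pol k x mu u * mu (x, k) - pol k x mu' u * mu' (x, k)
          = pol k x mu u * (mu (x, k) - mu' (x,k)) + mu' (x,k) * (pol k x mu u - pol k x mu' u)"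
        by (simp add: algebra_simps)
      also have "\<bar>\<dots>\<bar> \<le> pol k x mu u * \<bar>mu (x, k) - mu' (x,k)\<bar> + mu' (x,k) * \<bar>pol k x mu u - pol k x mu' u\<bar>"
        using piD(1)[OF k] mu'D(1)[of "(x,k)"]
        by (metis abs_mult abs_of_nonneg abs_triangle_ineq)
      finally show "\<bar>pol k x mu u * mu (x, k) - pol k x mu' u * mu' (x, k)\<bar> \<le> \<dots>" .
    qed
    also have "\<dots> = (\<Sum>k\<in>I. \<Sum>x\<in>UNIV.
        \<bar>mu (x, k) - mu' (x,k)\<bar> * (\<Sum>u\<in>UNIV. pol k x mu u) + mu' (x,k) * (\<Sum>u\<in>UNIV. \<bar>pol k x mu u - pol k x mu' u\<bar>))"
      by (rule sum.cong, simp, subst sum.swap) (simp add: sum.distrib sum_distrib_left sum_distrib_right mult.commute)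
    also have "\<dots> \<le> (\<Sum>k\<in>I. \<Sum>x\<in>UNIV. \<bar>mu (x, k) - mu' (x,k)\<bar> + mu' (x,k) * (L_Q * d))"
      by (intro sum_mono add_mono mult_left_mono) (auto simp: piD pilip mu'D)
    also have "\<dots> = d + L_Q * d"
      by (simp add: sum.distrib d_eq sum_distrib_right[symmetric] sum_mu')
    finally show ?thesis by (simp add: algebra_simps)
  qed
  have Plip: "(\<Sum>x'\<in>UNIV. \<bar>P k x u mu nu x' - P k x u mu' nu' x'\<bar>) \<le> L_P * (d + dn)" if "k \<in> I" for k x u
    using P_lip[OF _ mu mu' nu nu', of k x u] that by (simp add: l1_def d_def dn_def I_def)
  have PD: "\<And>x'. 0 \<le> P k x u mu nu x'" "(\<Sum>x'\<in>UNIV. P k x u mu nu x') = 1" if "k \<in> I" for k x u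
    using P_dist[OF _ mu nu, of k x u] that unfolding is_dist_def I_def by auto
  define g where "g = (\<lambda>k x u x'. \<bar>mu (x,k) - mu' (x,k)\<bar> * pol k x mu u * P k x u mu nu x'
      + mu' (x,k) * \<bar>pol k x mu u - pol k x mu' u\<bar> * P k x u mu nu x'
      + mu' (x,k) * pol k x mu' u * \<bar>P k x u mu nu x' - P k x u mu' nu' x'\<bar>)"
  have "l1 (UNIV \<times> idx K) (P_MF P mu pol) (P_MF P mu' pol)
      = (\<Sum>k\<in>I. \<Sum>x'\<in>UNIV. \<bar>\<Sum>x\<in>UNIV. \<Sum>u\<in>UNIV. mu (x, k) * pol k x mu u * P k x u mu nu x'
          - mu' (x, k) * pol k x mu' u * P k x u mu' nu' x'\<bar>)"
    by (simp only: l1_def sum_prod_swap P_MF_def nu_def nu'_def case_prod_conv sum_subtractf I_def)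
  also have "\<dots> \<le> (\<Sum>k\<in>I. \<Sum>x'\<in>UNIV. \<Sum>x\<in>UNIV. \<Sum>u\<in>UNIV. g k x u x')"
  proof (intro sum_mono order.trans[OF sum_abs])
    fix k x' x u assume k: "k \<in> I"
      let ?a = "mu (x,k)" and ?b = "mu' (x,k)" and ?p = "pol k x mu u" and ?q = "pol k x mu' u"
        and ?P = "P k x u mu nu x'" and ?Q = "P k x u mu' nu' x'"
      have e: "?a * ?p * ?P - ?b * ?q * ?Q = (?a - ?b) * ?p * ?P + ?b * (?p - ?q) * ?P + ?b * ?q * (?P - ?Q)"
        by (simp add: algebra_simps)
      have "\<bar>(?a - ?b) * ?p * ?P + ?b * (?p - ?q) * ?P + ?b * ?q * (?P - ?Q)\<bar>
          \<le> \<bar>(?a - ?b) * ?p * ?P\<bar> + \<bar>?b * (?p - ?q) * ?P\<bar> + \<bar>?b * ?q * (?P - ?Q)\<bar>"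
        by (rule order.trans[OF abs_triangle_ineq], rule add_right_mono, rule abs_triangle_ineq)
      also have "\<dots> = g k x u x'"
        using piD(1)[OF k] pi'D(1)[OF k] mu'D(1) PD(1)[OF k]
        by (simp add: g_def abs_mult)
      finally show "\<bar>?a * ?p * ?P - ?b * ?q * ?Q\<bar> \<le> g k x u x'" by (simp only: e)
  qed
  also have "\<dots> = (\<Sum>k\<in>I. \<Sum>x\<in>UNIV. \<Sum>u\<in>UNIV. \<Sum>x'\<in>UNIV. g k x u x')"
    by (rule sum.cong, simp, subst sum.swap) (rule sum.cong, simp, subst sum.swap, simp)
  also have "\<dots> \<le> (\<Sum>k\<in>I. \<Sum>x\<in>UNIV. \<Sum>u\<in>UNIV.
        \<bar>mu (x,k) - mu' (x,k)\<bar> * pol k x mu u + mu' (x,k) * \<bar>pol k x mu u - pol k x mu' u\<bar>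
        + mu' (x,k) * pol k x mu' u * (L_P * (d + dn)))"
  proof (intro sum_mono)
    fix k x u assume k: "k \<in> I"
    have "(\<Sum>x'\<in>UNIV. g k x u x') = \<bar>mu (x,k) - mu' (x,k)\<bar> * pol k x mu u * (\<Sum>x'\<in>UNIV. P k x u mu nu x')
        + mu' (x,k) * \<bar>pol k x mu u - pol k x mu' u\<bar> * (\<Sum>x'\<in>UNIV. P k x u mu nu x')
        + mu' (x,k) * pol k x mu' u * (\<Sum>x'\<in>UNIV. \<bar>P k x u mu nu x' - P k x u mu' nu' x'\<bar>)"
      by (simp add: g_def sum.distrib sum_distrib_left)
    also have "\<dots> \<le> \<bar>mu (x,k) - mu' (x,k)\<bar> * pol k x mu u + mu' (x,k) * \<bar>pol k x mu u - pol k x mu' u\<bar>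
        + mu' (x,k) * pol k x mu' u * (L_P * (d + dn))"
      using PD(2)[OF k] Plip[OF k] pi'D(1)[OF k] mu'D(1)
      by (simp add: mult_left_mono)
    finally show "(\<Sum>x'\<in>UNIV. g k x u x') \<le> \<dots>" .
  qed
  also have "\<dots> = (\<Sum>k\<in>I. \<Sum>x\<in>UNIV.
        \<bar>mu (x,k) - mu' (x,k)\<bar> * (\<Sum>u\<in>UNIV. pol k x mu u) + mu' (x,k) * (\<Sum>u\<in>UNIV. \<bar>pol k x mu u - pol k x mu' u\<bar>)
        + mu' (x,k) * (\<Sum>u\<in>UNIV. pol k x mu' u) * (L_P * (d + dn)))"
    by (simp add: sum.distrib sum_distrib_left sum_distrib_right)
  also have "\<dots> \<le> (\<Sum>k\<in>I. \<Sum>x\<in>UNIV. \<bar>mu (x,k) - mu' (x,k)\<bar> + mu' (x,k) * (L_Q * d)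
        + mu' (x,k) * (L_P * (d + dn)))"
    by (intro sum_mono add_mono mult_left_mono) (auto simp: piD pi'D pilip mu'D)
  also have "\<dots> = d + L_Q * d + L_P * (d + dn)"
    by (simp add: sum.distrib d_eq sum_distrib_right[symmetric] sum_mu')
  also have "\<dots> \<le> d + L_Q * d + L_P * (d + (1 + L_Q) * d)"
    using dn_le LP by (intro add_left_mono mult_left_mono) auto
  also have "\<dots> = ((1 + L_Q) + L_P * (2 + L_Q)) * l1 (UNIV \<times> idx K) mu mu'"
    by (simp add: d_def I_def algebra_simps)
  finally show ?thesis .
qed

end
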